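(* Under the standing assumptions below, let $\varepsilon\in(0,1]$ and let $0<c_1<c_2$ be constants, independent of $\varepsilon$, with $-c_2\le\partial_n\phi^\varepsilon\le-c_1$ on $\Sigma_0$ for all $\varepsilon\in(0,1]$. If a bounded $w\in C^{1,\gamma}(\Sigma_0)$ solves $\mathcal I^{1/\varepsilon}(w,y)=g(y)$ for all $y\in\Sigma_0$, then $$-\frac{1}{c_1\varepsilon}\|g\|_{L^\infty}\le w\le\frac{1}{c_1\varepsilon}\|g\|_{L^\infty}\quad\text{on }\Sigma_0.$$
   Context: Let $d\ge1$, $n\in\mathbb R^{d+1}$ a unit vector. For $r>0$, $\Sigma^r=\{y:0<y\cdot n<r\}$, $\Sigma_r=\{y:y\cdot n=r\}$, $\Sigma_0=\{y:y\cdot n=0\}$; $\partial_n=n\cdot\nabla$. Fix $\gamma\in(0,1)$, $0<\lambda\le\Lambda$. $A$ is a $\mathbb Z^{d+1}$-periodic $C^\gamma$ map into symmetric matrices with $\lambda I\le A\le\Lambda I$; $B:\mathbb R^{d+1}\to\mathbb R^{d+1}$ and $g:\mathbb R^{d+1}\to\mathbb R$ are $\mathbb Z^{d+1}$-periodic and $C^\gamma$. With $L\phi=\operatorname{Tr}(AD^2\phi)+B\cdot\nabla\phi$, let $m$ be the unique periodic positive $L^2$ function with $\int_{[0,1]^{d+1}}m=1$ and $\int m\,L\phi=0$ for all periodic $\phi\in C^2\cap L^\infty$; assume $\int_{[0,1]^{d+1}}Bm\,dy=0$. For bounded $u\in C^{1,\gamma}(\Sigma_0)$, $V^\varepsilon_u$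 is the unique bounded solution of $LV=0$ in $\Sigma^{1/\varepsilon}$, $V=0$ on $\Sigma_{1/\varepsilon}$, $V=u$ on $\Sigma_0$, and $\mathcal I^{1/\varepsilon}(u,y)=\partial_nV^\varepsilon_u(y)$ for $y\in\Sigma_0$. $\phi^\varepsilon$ is the unique bounded solution of $L\phi^\varepsilon=0$ in $\Sigma^{1/\varepsilon}$, $\phi^\varepsilon=0$ on $\Sigma_{1/\varepsilon}$, $\phi^\varepsilon=1/\varepsilon$ on $\Sigma_0$. *)

theory Defs
  imports "HOL-Analysis.Analysis"
begin

text \<open>Points of R^(d+1) are vectors of type real^'n with CARD('n) = d+1.\<close>

definition holder_cont :: "real \<Rightarrow> ('a::metric_space) set \<Rightarrow> ('a \<Rightarrow> 'b::metric_space) \<Rightarrow> bool" where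
  "holder_cont \<gamma> S f \<longleftrightarrow> (\<exists>C. \<forall>x\<in>S. \<forall>y\<in>S. dist (f x) (f y) \<le> C * dist x y powr \<gamma>)"

definition C_gamma :: "real \<Rightarrow> (real^'n \<Rightarrow> 'b::real_normed_vector) \<Rightarrow> bool" where
  "C_gamma \<gamma> f \<longleftrightarrow> bounded (range f) \<and> holder_cont \<gamma> UNIV f"

definition zperiodic :: "(real^'n \<Rightarrow> 'b) \<Rightarrow> bool" where
  "zperiodic f \<longleftrightarrow> (\<forall>y i. f (y + axis i 1) = f y)"

definition strip :: "real^'n \<Rightarrow> real \<Rightarrow> (real^'n) set" where
  "strip n r = {y. 0 < y \<bullet> n \<and> y \<bullet> n < r}"

definition closed_strip :: "real^'n \<Rightarrow> real \<Rightarrow> (real^'n) set" where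
  "closed_strip n r = {y. 0 \<le> y \<bullet> n \<and> y \<bullet> n \<le> r}"

definition hyperpl :: "real^'n \<Rightarrow> real \<Rightarrow> (real^'n) set" where
  "hyperpl n r = {y. y \<bullet> n = r}"

text \<open>L phi = Tr(A D^2 phi) + B . grad phi, given gradient G and Hessian H of phi.\<close>
definition Lop :: "(real^'n \<Rightarrow> real^'n^'n) \<Rightarrow> (real^'n \<Rightarrow> real^'n)
    \<Rightarrow> (real^'n \<Rightarrow> real^'n) \<Rightarrow> (real^'n \<Rightarrow> real^'n^'n) \<Rightarrow> real^'n \<Rightarrow> real" where
  "Lop A B G H y = (\<Sum>i\<in>UNIV. \<Sum>j\<in>UNIV. A y $ i $ j * H y $ i $ j) + B y \<bullet> G y"

definition C2_with :: "(real^'n) set \<Rightarrow> (real^'n \<Rightarrow> real) \<Rightarrow> (real^'n \<Rightarrow> real^'n)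
    \<Rightarrow> (real^'n \<Rightarrow> real^'n^'n) \<Rightarrow> bool" where
  "C2_with S V G H \<longleftrightarrow>
     (\<forall>y\<in>S. (V has_derivative (\<lambda>h. G y \<bullet> h)) (at y) \<and> (G has_derivative (\<lambda>h. H y *v h)) (at y))
     \<and> continuous_on S H"

definition L_harmonic :: "(real^'n \<Rightarrow> real^'n^'n) \<Rightarrow> (real^'n \<Rightarrow> real^'n) \<Rightarrow> (real^'n) set
    \<Rightarrow> (real^'n \<Rightarrow> real) \<Rightarrow> bool" where
  "L_harmonic A B S V \<longleftrightarrow> (\<exists>G H. C2_with S V G H \<and> (\<forall>y\<in>S. Lop A B G H y = 0))"

text \<open>V is a bounded solution of L V = 0 in Sigma^r, V = 0 on Sigma_r, V = u on Sigma_0.\<close>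
definition strip_dirichlet_sol :: "(real^'n \<Rightarrow> real^'n^'n) \<Rightarrow> (real^'n \<Rightarrow> real^'n) \<Rightarrow> real^'n
    \<Rightarrow> real \<Rightarrow> (real^'n \<Rightarrow> real) \<Rightarrow> (real^'n \<Rightarrow> real) \<Rightarrow> bool" where
  "strip_dirichlet_sol A B n r u V \<longleftrightarrow>
     L_harmonic A B (strip n r) V
     \<and> continuous_on (closed_strip n r) V
     \<and> bounded (V ` closed_strip n r)
     \<and> (\<forall>y\<in>hyperpl n r. V y = 0)
     \<and> (\<forall>y\<in>hyperpl n 0. V y = u y)"

text \<open>(One-sided, inward) normal derivative partial_n V (y) = D at a point of Sigma_0.\<close>
definition normal_deriv :: "(real^'n \<Rightarrow> real) \<Rightarrow> real^'n \<Rightarrow> real^'n \<Rightarrow> real \<Rightarrow> bool" where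
  "normal_deriv V n y D \<longleftrightarrow> ((\<lambda>t. V (y + t *\<^sub>R n)) has_real_derivative D) (at_right 0)"

definition unit_cube :: "(real^'n) set" where
  "unit_cube = cbox 0 One"

definition invariant_density :: "(real^'n \<Rightarrow> real^'n^'n) \<Rightarrow> (real^'n \<Rightarrow> real^'n)
    \<Rightarrow> (real^'n \<Rightarrow> real) \<Rightarrow> bool" where
  "invariant_density A B m \<longleftrightarrow>
     zperiodic m \<and> (\<forall>y. 0 < m y)
     \<and> m integrable_on unit_cube \<and> (\<lambda>y. (m y)\<^sup>2) integrable_on unit_cube
     \<and> integral unit_cube m = 1
     \<and> (\<forall>\<phi> G H. zperiodic \<phi> \<and> bounded (range \<phi>) \<and> C2_with UNIV \<phi> G H
          \<longrightarrow> integral unit_cube (\<lambda>y. m y * Lop A B G H y) = 0)"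

definition C1_gamma_on :: "real \<Rightarrow> (real^'n) set \<Rightarrow> (real^'n \<Rightarrow> real) \<Rightarrow> bool" where
  "C1_gamma_on \<gamma> S u \<longleftrightarrow> bounded (u ` S) \<and>
     (\<exists>G. (\<forall>y\<in>S. (u has_derivative (\<lambda>h. G y \<bullet> h)) (at y within S))
          \<and> bounded (G ` S) \<and> holder_cont \<gamma> S G)"

end

theory Submission
  imports Defs
begin


definition Qf :: "('n::finite \<Rightarrow> 'n \<Rightarrow> real) \<Rightarrow> ('n \<Rightarrow> real) \<Rightarrow> real" where
  "Qf A x = (\<Sum>i\<in>UNIV. \<Sum>k\<in>UNIV. A i k * x i * x k)"

lemma Qf_shift:
  "Qf A (\<lambda>i. x i + (if i = j then t else 0)) =
     Qf A x + t * (\<Sum>k\<in>UNIV. A j k * x k) + t * (\<Sum>i\<in>UNIV. A i j * x i) + t^2 * A j j"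
proof -
  have "Qf A (\<lambda>i. x i + (if i = j then t else 0)) =
    (\<Sum>i\<in>UNIV. \<Sum>k\<in>UNIV. A i k * x i * x k + (if i = j then t * A j k * x k else 0)
        + (if k = j then t * A i j * x i else 0) + (if i = j \<and> k = j then t*t*A j j else 0))"
    unfolding Qf_def by (intro sum.cong refl) (auto simp: algebra_simps)
  also have "\<dots> = Qf A x + (\<Sum>i\<in>UNIV. \<Sum>k\<in>UNIV. (if i = j then t * A j k * x k else 0))
      + (\<Sum>i\<in>UNIV. \<Sum>k\<in>UNIV. (if k = j then t * A i j * x i else 0))
      + (\<Sum>i\<in>UNIV. \<Sum>k\<in>UNIV. (if i = j \<and> k = j then t*t*A j j else 0))"
    by (simp only: sum.distrib Qf_def)
  also have "(\<Sum>i\<in>UNIV. \<Sum>k\<in>UNIV. (if i = j then t * A j k * x k else 0)) = t * (\<Sum>k\<in>UNIV. A j k * x k)"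
  proof -
    have "\<And>i. (\<Sum>k\<in>UNIV. (if i = j then t * A j k * x k else 0)) = (if i = j then (\<Sum>k\<in>UNIV. t * A j k * x k) else 0)"
      by auto
    then show ?thesis by (simp add: sum_distrib_left mult.assoc)
  qed
  also have "(\<Sum>i\<in>UNIV. \<Sum>k\<in>UNIV. (if k = j then t * A i j * x i else 0)) = t * (\<Sum>i\<in>UNIV. A i j * x i)"
    by (simp add: sum_distrib_left mult.assoc)
  also have "(\<Sum>i\<in>UNIV. \<Sum>k\<in>UNIV. (if i = j \<and> k = j then t*t*A j j else 0)) = t^2 * A j j"
  proof -
    have "\<And>i. (\<Sum>k\<in>UNIV. (if i = j \<and> k = j then t*t*A j j else 0)) = (if i = j then t*t*A j j else 0)"
      by auto
    then show ?thesis by (simp add: power2_eq_square)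
  qed
  finally show ?thesis .
qed

lemma Qf_delta: "Qf A (\<lambda>i. if i = j then t else 0) = t^2 * A j j"
  using Qf_shift[of A "\<lambda>i. 0" j t] by (simp add: Qf_def)

lemma Qf_two:
  assumes sym: "\<forall>i k. A i k = A k i"
  shows "Qf A (\<lambda>i. (if i = k then 1 else 0) + (if i = j then t else 0)) = A k k + 2 * t * A j k + t^2 * A j j"
proof -
  have "(\<Sum>m\<in>UNIV. A j m * (if m = k then 1 else 0)) = A j k"
  proof -
    have "\<And>m. A j m * (if m = k then 1 else 0) = (if m = k then A j k else 0)" by simp
    then show ?thesis by simp
  qed
  moreover have "(\<Sum>m\<in>UNIV. A m j * (if m = k then 1 else 0)) = A j k"
  proof -
    have "\<And>m. A m j * (if m = k then 1 else 0) = (if m = k then A j k else 0)"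
      using sym[rule_format, of k j] by simp
    then show ?thesis by simp
  qed
  ultimately show ?thesis
    using Qf_shift[of A "\<lambda>i. if i = k then 1 else 0" j t] Qf_delta[of A k 1] by simp
qed

lemma zero_diag:
  assumes sym: "\<forall>i k. A i k = A k i" and psd: "\<forall>x. 0 \<le> Qf A x" and z: "A j j = 0"
  shows "A j k = 0"
proof (rule ccontr)
  assume nz: "A j k \<noteq> 0"
  define t where "t = - (A k k + 1) / (2 * A j k)"
  have "0 \<le> A k k + 2 * t * A j k + t^2 * A j j"
    using psd Qf_two[OF sym, of k j t] by metis
  also have "\<dots> = -1"
  proof -
    have "2 * t * A j k = - (A k k + 1)" using nz by (simp add: t_def)
    then show ?thesis using z by simp
  qed
  finally show False by simp
qed

lemma Qf_lin: "Qf (\<lambda>i k. A i k - c * M i k) x = Qf A x - c * Qf M x"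
  by (simp add: Qf_def left_diff_distrib sum_subtractf sum_distrib_left mult.assoc)

lemma Qf_outer: "Qf (\<lambda>i k. a i * a k) x = (\<Sum>i\<in>UNIV. a i * x i)^2"
  unfolding Qf_def power2_eq_square sum_product by (simp add: mult.commute mult.left_commute)

lemma trace_psd:
  fixes A H :: "'n::finite \<Rightarrow> 'n \<Rightarrow> real"
  assumes "\<forall>i k. A i k = A k i" "\<forall>x. 0 \<le> Qf A x" "\<forall>x. 0 \<le> Qf H x"
  shows "0 \<le> (\<Sum>i\<in>UNIV. \<Sum>k\<in>UNIV. A i k * H i k)"
  using assms(1,2)
proof (induction "card {i. A i i \<noteq> 0}" arbitrary: A rule: less_induct)
  case less
  note sym = less.prems(1) and psd = less.prems(2)
  show ?case
  proof (cases "\<exists>j. A j j \<noteq> 0")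
    case False
    then have "\<And>i k. A i k = 0" using zero_diag[OF sym psd] by simp
    then show ?thesis by simp
  next
    case True
    then obtain j where jn: "A j j \<noteq> 0" by blast
    have "0 \<le> Qf A (\<lambda>i. if i = j then 1 else 0)" using psd by blast
    then have "0 \<le> A j j" using Qf_delta[of A j 1] by simp
    with jn have jp: "0 < A j j" by simp
    define a where "a = (\<lambda>k. A k j)"
    define A' where "A' = (\<lambda>i k. A i k - (1 / A j j) * (a i * a k))"
    have sym': "\<forall>i k. A' i k = A' k i"
    proof (intro allI)
      fix i k show "A' i k = A' k i" unfolding A'_def a_def using sym[rule_format, of i k] by (simp add: mult.commute)
    qed
    have psd': "\<forall>x. 0 \<le> Qf A' x"
    proof
      fix x
      define s where "s = (\<Sum>i\<in>UNIV. a i * x i)"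
      have s1: "(\<Sum>k\<in>UNIV. A j k * x k) = s" unfolding s_def a_def by (rule sum.cong[OF refl]) (metis sym)
      have s2: "(\<Sum>k\<in>UNIV. A k j * x k) = s" by (simp add: s_def a_def)
      have "Qf A' x = Qf A x - (1 / A j j) * s^2"
        unfolding A'_def Qf_lin Qf_outer s_def ..
      also have "\<dots> = Qf A (\<lambda>i. x i + (if i = j then - s / A j j else 0))"
        unfolding Qf_shift s1 s2 using jp by (simp add: field_simps power2_eq_square)
      also have "0 \<le> \<dots>" using psd by blast
      finally show "0 \<le> Qf A' x" .
    qed
    have sub: "{i. A' i i \<noteq> 0} \<subset> {i. A i i \<noteq> 0}"
    proof
      show "{i. A' i i \<noteq> 0} \<subseteq> {i. A i i \<noteq> 0}"
      proof
        fix i assume "i \<in> {i. A' i i \<noteq> 0}"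
        then have ne: "A' i i \<noteq> 0" by simp
        show "i \<in> {i. A i i \<noteq> 0}"
        proof (rule ccontr)
          assume "i \<notin> {i. A i i \<noteq> 0}"
          then have z: "A i i = 0" by simp
          then have "A i j = 0" using zero_diag[OF sym psd z] by simp
          then have "A' i i = 0" using z by (simp add: A'_def a_def)
          with ne show False by simp
        qed
      qed
      have "A' j j = 0" using jp by (simp add: A'_def a_def power2_eq_square)
      then show "{i. A' i i \<noteq> 0} \<noteq> {i. A i i \<noteq> 0}" using jn by blast
    qed
    have "card {i. A' i i \<noteq> 0} < card {i. A i i \<noteq> 0}"
      by (rule psubset_card_mono[OF _ sub]) simp
    from less.hyps[OF this sym' psd'] have IH: "0 \<le> (\<Sum>i\<in>UNIV. \<Sum>k\<in>UNIV. A' i k * H i k)" .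
    have eq: "(\<Sum>i\<in>UNIV. \<Sum>k\<in>UNIV. A i k * H i k) =
        (\<Sum>i\<in>UNIV. \<Sum>k\<in>UNIV. A' i k * H i k) + (1 / A j j) * Qf H a"
    proof -
      have "(\<Sum>i\<in>UNIV. \<Sum>k\<in>UNIV. A' i k * H i k) = (\<Sum>i\<in>UNIV. \<Sum>k\<in>UNIV. A i k * H i k)
          - (1 / A j j) * (\<Sum>i\<in>UNIV. \<Sum>k\<in>UNIV. a i * a k * H i k)"
        by (simp add: A'_def left_diff_distrib sum_subtractf sum_distrib_left mult.assoc)
      moreover have "Qf H a = (\<Sum>i\<in>UNIV. \<Sum>k\<in>UNIV. a i * a k * H i k)"
        by (simp add: Qf_def mult.commute mult.left_commute)
      ultimately show ?thesis by simp
    qed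
    have "0 \<le> Qf H a" using assms(3) by blast
    with IH jp show ?thesis unfolding eq by simp
  qed
qed



lemma dir_deriv:
  fixes U :: "real^'n \<Rightarrow> real"
  assumes "(U has_derivative (\<lambda>k. G \<bullet> k)) (at z)" and that: "z = y + s *\<^sub>R v"
  shows "((\<lambda>t. U (y + t *\<^sub>R v)) has_real_derivative (G \<bullet> v)) (at s within T)"
proof -
  have "((\<lambda>t. y + t *\<^sub>R v) has_derivative (\<lambda>t. t *\<^sub>R v)) (at s within T)"
    by (intro derivative_eq_intros) auto
  from has_derivative_compose[OF this, of U "\<lambda>k. G \<bullet> k"] assms that
  have "((\<lambda>t. U (y + t *\<^sub>R v)) has_derivative (\<lambda>t. G \<bullet> (t *\<^sub>R v))) (at s within T)" by simp
  then show ?thesis unfolding has_field_derivative_def by (simp add: algebra_simps mult_commute_abs)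
qed

lemma second_order:
  fixes U :: "real^'n \<Rightarrow> real"
  assumes S: "open S" "y \<in> S" and min: "\<forall>z\<in>S. U y \<le> U z"
    and dU: "\<forall>z\<in>S. (U has_derivative (\<lambda>k. GU z \<bullet> k)) (at z)"
    and dG: "(GU has_derivative (\<lambda>k. HU *v k)) (at y)"
  shows "GU y = 0" "0 \<le> \<xi> \<bullet> (HU *v \<xi>)"
proof -
  have ev: "eventually (\<lambda>z. U y \<le> U z) (at y)"
    using eventually_at_in_open'[OF S] min by (auto elim: eventually_mono)
  have "(\<lambda>k. GU y \<bullet> k) = (\<lambda>k. 0)"
    by (rule has_derivative_local_min[OF _ ev]) (use dU S in auto)
  then have "GU y \<bullet> GU y = 0" by metis
  then show G0: "GU y = 0" by simp
  show "0 \<le> \<xi> \<bullet> (HU *v \<xi>)"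
  proof (rule ccontr)
    assume neg: "\<not> 0 \<le> \<xi> \<bullet> (HU *v \<xi>)"
    define c where "c = \<xi> \<bullet> (HU *v \<xi>)"
    have c: "c < 0" using neg c_def by simp
    then have xi: "\<xi> \<noteq> 0" by (auto simp: c_def)
    obtain r where r: "r > 0" "ball y r \<subseteq> S" using S open_contains_ball by blast
    define R where "R = r / norm \<xi>"
    have inS: "y + t *\<^sub>R \<xi> \<in> S" if "\<bar>t\<bar> < R" for t
    proof -
      have "norm (t *\<^sub>R \<xi>) < r" using that xi by (simp add: field_simps R_def)
      then show ?thesis using r by (auto simp: dist_norm)
    qed
    define g where "g t = GU (y + t *\<^sub>R \<xi>) \<bullet> \<xi>" for t
    have "((\<lambda>t. y + t *\<^sub>R \<xi>) has_derivative (\<lambda>t. t *\<^sub>R \<xi>)) (at 0)"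
      by (intro derivative_eq_intros) auto
    from has_derivative_compose[OF this, of GU "\<lambda>k. HU *v k"] dG
    have "((\<lambda>t. GU (y + t *\<^sub>R \<xi>)) has_derivative (\<lambda>t. HU *v (t *\<^sub>R \<xi>))) (at 0)" by simp
    then have "(g has_derivative (\<lambda>t. (HU *v (t *\<^sub>R \<xi>)) \<bullet> \<xi>)) (at 0)"
      unfolding g_def by (intro derivative_eq_intros) auto
    then have dg: "(g has_real_derivative c) (at 0)"
      unfolding has_field_derivative_def c_def
      by (simp add: matrix_vector_mult_scaleR inner_commute mult_commute_abs)
    from DERIV_neg_dec_right[OF dg c] obtain d where d: "d > 0" "\<forall>h>0. h < d \<longrightarrow> g 0 > g (0 + h)"
      by blast
    have g0: "g 0 = 0" using G0 by (simp add: g_def)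
    define t where "t = min d R / 2"
    have rx: "0 < R" using r xi by (simp add: R_def)
    have t: "0 < t" "t < d" "t < R" using d(1) rx unfolding t_def by (simp_all add: min_def)
    have "\<exists>z. 0 < z \<and> z < t \<and> U (y + t *\<^sub>R \<xi>) - U (y + 0 *\<^sub>R \<xi>) = (t - 0) * g z"
    proof (rule MVT2[OF t(1)])
      fix s assume s: "0 \<le> s" "s \<le> t"
      then have "y + s *\<^sub>R \<xi> \<in> S" using t by (intro inS) auto
      then show "((\<lambda>t. U (y + t *\<^sub>R \<xi>)) has_real_derivative g s) (at s)"
        unfolding g_def using dU by (intro dir_deriv[where z = "y + s *\<^sub>R \<xi>"]) auto
    qed
    then obtain z where z: "0 < z" "z < t" "U (y + t *\<^sub>R \<xi>) - U y = t * g z" by auto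
    have "g z < 0" using d z t g0 by auto
    then have "t * g z < 0" using t(1) by (rule mult_pos_neg[rotated])
    then have "U (y + t *\<^sub>R \<xi>) < U y" using z(3) by linarith
    moreover have "y + t *\<^sub>R \<xi> \<in> S" using t by (intro inS) auto
    ultimately show False using min by force
  qed
qed



definition outer :: "real^'n \<Rightarrow> real^'n^'n" where
  "outer v = (\<chi> i j. v $ i * v $ j)"

lemma outer_mult: "outer v *v k = (v \<bullet> k) *\<^sub>R v"
  by (simp add: outer_def vec_eq_iff matrix_vector_mult_def inner_vec_def sum_distrib_left mult.commute mult.left_commute)

lemma neg_mv: "(- M) *v x = - (M *v (x::real^'n))"
  by (simp add: vec_eq_iff matrix_vector_mult_def sum_negf)

definition hh :: "real^'n \<Rightarrow> real" where "hh y = sqrt (1 + y \<bullet> y)"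
definition Gh :: "real^'n \<Rightarrow> real^'n" where "Gh y = (1 / hh y) *\<^sub>R y"
definition Hh :: "real^'n \<Rightarrow> real^'n^'n" where
  "Hh y = (1 / hh y) *\<^sub>R mat 1 - (1 / (hh y * (1 + y \<bullet> y))) *\<^sub>R outer y"

lemma hh_pos: "1 \<le> hh y"
  by (simp add: hh_def)

lemma hh_ge_norm: "norm y \<le> hh y"
  unfolding hh_def by (simp add: norm_eq_sqrt_inner)

lemma hh_deriv: "(hh has_derivative (\<lambda>k. Gh y \<bullet> k)) (at y)"
proof -
  have p: "0 < 1 + y \<bullet> y" by (simp add: add_pos_nonneg)
  show ?thesis
    unfolding hh_def[abs_def] Gh_def hh_def
    using p by (auto intro!: derivative_eq_intros simp: inner_commute field_simps)
qed

lemma Gh_deriv: "(Gh has_derivative (\<lambda>k. Hh y *v k)) (at y)"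
proof -
  have p: "0 < 1 + y \<bullet> y" by (simp add: add_pos_nonneg)
  have "((\<lambda>y. (1 / sqrt (1 + y \<bullet> y)) *\<^sub>R y) has_derivative
     (\<lambda>k. (1 / sqrt (1 + y \<bullet> y)) *\<^sub>R k - ((y \<bullet> k) / (sqrt (1 + y \<bullet> y) * (1 + y \<bullet> y))) *\<^sub>R y)) (at y)"
    using p by (auto intro!: derivative_eq_intros simp: inner_commute field_simps)
  then show ?thesis
    unfolding Gh_def[abs_def] Hh_def hh_def
    by (simp add: matrix_vector_mult_diff_rdistrib scaleR_matrix_vector_assoc[symmetric] outer_mult)
qed

definition qf :: "real \<Rightarrow> real^'n \<Rightarrow> real^'n \<Rightarrow> real" where
  "qf a n y = 1 - exp (- a * (y \<bullet> n))"
definition Gq :: "real \<Rightarrow> real^'n \<Rightarrow> real^'n \<Rightarrow> real^'n" where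
  "Gq a n y = (a * exp (- a * (y \<bullet> n))) *\<^sub>R n"
definition Hq :: "real \<Rightarrow> real^'n \<Rightarrow> real^'n \<Rightarrow> real^'n^'n" where
  "Hq a n y = (- (a^2) * exp (- a * (y \<bullet> n))) *\<^sub>R outer n"

lemma qf_deriv: "(qf a n has_derivative (\<lambda>k. Gq a n y \<bullet> k)) (at y)"
  unfolding qf_def[abs_def] Gq_def
  by (auto intro!: derivative_eq_intros simp: inner_commute field_simps)

lemma Gq_deriv: "(Gq a n has_derivative (\<lambda>k. Hq a n y *v k)) (at y)"
proof -
  have "((\<lambda>y. (a * exp (- a * (y \<bullet> n))) *\<^sub>R n) has_derivative
     (\<lambda>k. (- (a^2) * exp (- a * (y \<bullet> n)) * (n \<bullet> k)) *\<^sub>R n)) (at y)"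
    by (auto intro!: derivative_eq_intros simp: inner_commute power2_eq_square)
  then show ?thesis
    unfolding Gq_def[abs_def]
    by (rule has_derivative_eq_rhs) (simp add: fun_eq_iff Hq_def neg_mv scaleR_matrix_vector_assoc[symmetric] outer_mult)
qed



definition trA :: "real^'n^'n \<Rightarrow> real^'n^'n \<Rightarrow> real" where
  "trA M H = (\<Sum>i\<in>UNIV. \<Sum>j\<in>UNIV. M $ i $ j * H $ i $ j)"

lemma trA_outer: "trA M (c *\<^sub>R outer v) = c * (v \<bullet> (M *v v))"
  by (simp add: trA_def outer_def inner_vec_def matrix_vector_mult_def sum_distrib_left mult.commute mult.left_commute)

lemma trA_mat1: "trA M (c *\<^sub>R mat 1) = c * (\<Sum>i\<in>UNIV. M $ i $ i)"
proof -
  have "\<And>i. (\<Sum>j\<in>UNIV. M $ i $ j * (c *\<^sub>R mat 1) $ i $ j) = c * M $ i $ i"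
  proof -
    fix i
    have "\<And>j. M $ i $ j * (c *\<^sub>R mat 1) $ i $ j = (if j = i then c * M $ i $ i else 0)"
      by (auto simp: mat_def)
    then show "(\<Sum>j\<in>UNIV. M $ i $ j * (c *\<^sub>R mat 1) $ i $ j) = c * M $ i $ i" by simp
  qed
  then show ?thesis by (simp add: trA_def sum_distrib_left)
qed

lemma trA_diff: "trA M (H1 - H2) = trA M H1 - trA M H2"
  by (simp add: trA_def algebra_simps sum_subtractf)

lemma trA_add: "trA M (H1 + H2) = trA M H1 + trA M H2"
  by (simp add: trA_def algebra_simps sum.distrib)

lemma trA_scale: "trA M (c *\<^sub>R H1) = c * trA M H1"
  by (simp add: trA_def algebra_simps sum_distrib_left)

lemma diag_quad: "M $ i $ i = axis i 1 \<bullet> (M *v axis i 1)"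
  by (simp add: inner_axis' matrix_vector_mult_basis column_def)

lemma Lq_bound:
  fixes M :: "real^'n^'n" and b n :: "real^'n"
  assumes lam: "0 < lam" and ell: "\<forall>\<xi>. lam * (norm \<xi>)\<^sup>2 \<le> \<xi> \<bullet> (M *v \<xi>)"
    and b: "norm b \<le> Bm" and n: "norm n = 1" and a: "a = (Bm + 1) / lam"
  shows "trA M (Hq a n y) + b \<bullet> Gq a n y \<le> - a * exp (- a * (y \<bullet> n))"
proof -
  define e where "e = exp (- a * (y \<bullet> n))"
  have e: "0 < e" by (simp add: e_def)
  have Bm0: "0 \<le> Bm" using b norm_ge_zero order_trans by blast
  have apos: "0 < a" using a lam Bm0 by simp
  have al: "a * lam = Bm + 1" using a lam by simp
  have nM: "lam \<le> n \<bullet> (M *v n)" using ell[rule_format, of n] n by simp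
  have bn: "b \<bullet> n \<le> Bm" using norm_cauchy_schwarz[of b n] b n by simp
  have "trA M (Hq a n y) = - (a^2) * e * (n \<bullet> (M *v n))"
    unfolding Hq_def trA_outer e_def ..
  also have "\<dots> \<le> - (a^2) * e * lam"
    using nM e apos by (simp add: mult_left_mono)
  finally have t1: "trA M (Hq a n y) \<le> - (a^2) * e * lam" .
  have t2: "b \<bullet> Gq a n y \<le> a * e * Bm"
    unfolding Gq_def e_def[symmetric] using bn apos e by (simp add: mult_left_mono)
  have "- (a^2) * e * lam + a * e * Bm = a * e * (Bm - a * lam)"
    by (simp add: power2_eq_square algebra_simps)
  also have "\<dots> = - a * e" using al by simp
  finally show ?thesis using t1 t2 unfolding e_def by linarith
qed

lemma Lh_bound:
  fixes M :: "real^'n^'n" and b :: "real^'n"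
  assumes ell: "\<forall>\<xi>. 0 \<le> \<xi> \<bullet> (M *v \<xi>) \<and> \<xi> \<bullet> (M *v \<xi>) \<le> Lam * (norm \<xi>)\<^sup>2"
    and b: "norm b \<le> Bm"
  shows "trA M (Hh y) + b \<bullet> Gh y \<le> real CARD('n) * Lam + Bm"
proof -
  have h1: "1 \<le> hh y" by (rule hh_pos)
  have hpos: "0 < hh y" using h1 by simp
  have p: "0 < 1 + y \<bullet> y" by (simp add: add_pos_nonneg)
  have d0: "0 \<le> M $ i $ i" for i using ell[rule_format, of "axis i 1"] diag_quad[of M i] by simp
  have d1: "M $ i $ i \<le> Lam" for i using ell[rule_format, of "axis i 1"] diag_quad[of M i] by simp
  have sd0: "0 \<le> (\<Sum>i\<in>UNIV. M $ i $ i)" using d0 by (simp add: sum_nonneg)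
  have sd1: "(\<Sum>i\<in>UNIV. M $ i $ i) \<le> real CARD('n) * Lam"
    using sum_mono[of UNIV "\<lambda>i. M $ i $ i" "\<lambda>i. Lam"] d1 by simp
  have "trA M (Hh y) = (1 / hh y) * (\<Sum>i\<in>UNIV. M $ i $ i) - (1 / (hh y * (1 + y \<bullet> y))) * (y \<bullet> (M *v y))"
    unfolding Hh_def trA_diff trA_mat1 trA_outer ..
  also have "\<dots> \<le> (1 / hh y) * (\<Sum>i\<in>UNIV. M $ i $ i)"
    using ell hpos p by (simp add: mult_nonneg_nonneg)
  also have "\<dots> \<le> (\<Sum>i\<in>UNIV. M $ i $ i)"
  proof -
    have "1 / hh y \<le> 1" "0 \<le> 1 / hh y" using h1 by auto
    then show ?thesis using sd0 mult_left_le_one_le[of "\<Sum>i\<in>UNIV. M $ i $ i" "1 / hh y"] by linarith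
  qed
  finally have t1: "trA M (Hh y) \<le> real CARD('n) * Lam" using sd1 by linarith
  have "b \<bullet> Gh y = (b \<bullet> y) / hh y" by (simp add: Gh_def)
  also have "\<dots> \<le> norm b * norm y / hh y"
    using norm_cauchy_schwarz[of b y] hpos by (simp add: divide_right_mono)
  also have "\<dots> \<le> norm b"
    using hh_ge_norm[of y] hpos by (simp add: divide_le_eq mult_left_mono)
  finally have t2: "b \<bullet> Gh y \<le> Bm" using b by linarith
  show ?thesis using t1 t2 by linarith
qed



lemma Qf_vec: "Qf (\<lambda>i k. M $ i $ k) x = (\<chi> i. x i) \<bullet> (M *v (\<chi> i. x i))"
  by (simp add: Qf_def inner_vec_def matrix_vector_mult_def sum_distrib_left mult.commute mult.left_commute)

lemma trace_nonneg:
  fixes M H :: "real^'n^'n"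
  assumes sym: "transpose M = M" and psdM: "\<forall>\<xi>. 0 \<le> \<xi> \<bullet> (M *v \<xi>)" and psdH: "\<forall>\<xi>. 0 \<le> \<xi> \<bullet> (H *v \<xi>)"
  shows "0 \<le> trA M H"
proof -
  have s: "\<forall>i k. M $ i $ k = M $ k $ i"
  proof (intro allI)
    fix i k
    have "M $ i $ k = transpose M $ i $ k" using sym by simp
    also have "\<dots> = M $ k $ i" by (simp add: transpose_def)
    finally show "M $ i $ k = M $ k $ i" .
  qed
  have "0 \<le> (\<Sum>i\<in>UNIV. \<Sum>k\<in>UNIV. M $ i $ k * H $ i $ k)"
    by (rule trace_psd) (use s psdM psdH in \<open>auto simp: Qf_vec\<close>)
  then show ?thesis by (simp add: trA_def)
qed

lemma Lop_eq: "Lop A B G H y = trA (A y) (H y) + B y \<bullet> G y"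
  by (simp add: Lop_def trA_def)

lemma closed_cs: "closed (closed_strip n r)"
  unfolding closed_strip_def
  by (intro closed_Collect_conj closed_Collect_le continuous_intros)

lemma open_ss: "open (strip n r)"
  unfolding strip_def
  by (intro open_Collect_conj open_Collect_less continuous_intros)



lemma core:
  fixes A :: "real^'n \<Rightarrow> real^'n^'n" and B :: "real^'n \<Rightarrow> real^'n"
    and \<phi> V w g :: "real^'n \<Rightarrow> real" and n y0 :: "real^'n"
  assumes n: "norm n = 1" and eps: "0 < \<epsilon>" and c1: "0 < c1" and lam: "0 < lam"
    and A_sym: "\<forall>y. transpose (A y) = A y"
    and A_ell: "\<forall>y \<xi>. lam * (norm \<xi>)\<^sup>2 \<le> \<xi> \<bullet> (A y *v \<xi>) \<and> \<xi> \<bullet> (A y *v \<xi>) \<le> Lam * (norm \<xi>)\<^sup>2"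
    and Bb: "\<forall>y. norm (B y) \<le> Bm"
    and phi: "strip_dirichlet_sol A B n (1/\<epsilon>) (\<lambda>_. 1/\<epsilon>) \<phi>"
    and phiD: "\<forall>y\<in>hyperpl n 0. \<exists>D. normal_deriv \<phi> n y D \<and> D \<le> -c1"
    and Vs: "strip_dirichlet_sol A B n (1/\<epsilon>) w V"
    and VD: "\<forall>y\<in>hyperpl n 0. normal_deriv V n y (g y)"
    and gK: "\<forall>y. - K \<le> g y" and K0: "0 \<le> K"
    and y0: "y0 \<in> hyperpl n 0"
  shows "w y0 \<le> K / (c1 * \<epsilon>)"
proof (rule ccontr)
  assume "\<not> w y0 \<le> K / (c1 * \<epsilon>)"
  define M where "M = w y0"
  have MK: "K / (c1 * \<epsilon>) < M" using \<open>\<not> _\<close> M_def by simp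
  have M0: "0 \<le> M" using MK K0 c1 eps by (smt (verit) divide_nonneg_pos mult_pos_pos)
  define \<delta> where "\<delta> = M * \<epsilon> * c1 - K"
  have \<delta>: "0 < \<delta>"
    using MK c1 eps by (simp add: \<delta>_def pos_divide_less_eq mult.commute mult.left_commute)
  define R where "R = 1 / \<epsilon>"
  have R: "0 < R" using eps by (simp add: R_def)
  have Me: "0 \<le> M * \<epsilon>" using M0 eps by simp
  have Bm0: "0 \<le> Bm" using Bb norm_ge_zero order_trans by blast
  define \<alpha> where "\<alpha> = (Bm + 1) / lam"
  have \<alpha>: "0 < \<alpha>" using Bm0 lam by (simp add: \<alpha>_def)
  define \<tau> where "\<tau> = \<delta> / (2 * \<alpha>)"
  have \<tau>: "0 < \<tau>" using \<delta> \<alpha> by (simp add: \<tau>_def)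
  have \<tau>\<alpha>: "\<tau> * \<alpha> = \<delta> / 2" using \<alpha> by (simp add: \<tau>_def)
  define qR where "qR = 1 - exp (- \<alpha> * R)"
  have qR: "0 < qR" using \<alpha> R by (simp add: qR_def)
  define \<beta> where "\<beta> = \<alpha> * exp (- \<alpha> * R)"
  have \<beta>: "0 < \<beta>" using \<alpha> by (simp add: \<beta>_def)
  define Ch where "Ch = \<bar>real CARD('n) * Lam\<bar> + Bm + 1"
  have Ch: "0 < Ch" using Bm0 by (simp add: Ch_def add_nonneg_pos)
  define \<eta> where "\<eta> = min (\<tau> * qR / (2 * hh y0)) (\<tau> * \<beta> / (2 * Ch))"
  have hy0: "0 < hh y0" using hh_pos[of y0] by simp
  have \<eta>: "0 < \<eta>" using \<tau> qR \<beta> Ch hy0 by (simp add: \<eta>_def)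
  have \<eta>1: "\<eta> * hh y0 \<le> \<tau> * qR / 2"
  proof -
    have "\<eta> \<le> \<tau> * qR / (2 * hh y0)" by (simp add: \<eta>_def)
    then have "\<eta> * hh y0 \<le> \<tau> * qR / (2 * hh y0) * hh y0" using hy0 by (intro mult_right_mono) auto
    also have "\<dots> = \<tau> * qR / 2" using hy0 by simp
    finally show ?thesis .
  qed
  have \<eta>2: "\<eta> * Ch \<le> \<tau> * \<beta> / 2"
  proof -
    have "\<eta> \<le> \<tau> * \<beta> / (2 * Ch)" by (simp add: \<eta>_def)
    then have "\<eta> * Ch \<le> \<tau> * \<beta> / (2 * Ch) * Ch" using Ch by (intro mult_right_mono) auto
    also have "\<dots> = \<tau> * \<beta> / 2" using Ch by simp
    finally show ?thesis .
  qed
  define U where "U y = M * \<epsilon> * \<phi> y - V y + \<tau> * qf \<alpha> n y + \<eta> * hh y" for y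
  define cs where "cs = closed_strip n R"
  define ss where "ss = strip n R"
  note phi' = phi[unfolded strip_dirichlet_sol_def R_def[symmetric]]
  note Vs' = Vs[unfolded strip_dirichlet_sol_def R_def[symmetric]]
  have cphi: "continuous_on cs \<phi>" using phi' by (simp add: cs_def)
  have cV: "continuous_on cs V" using Vs' by (simp add: cs_def)
  have contU: "continuous_on cs U"
    unfolding U_def[abs_def] qf_def hh_def
    by (intro continuous_intros cphi cV)
  obtain Cp where Cp: "\<forall>y\<in>cs. \<bar>\<phi> y\<bar> \<le> Cp"
    using phi' unfolding cs_def bounded_iff by auto
  obtain CV where CV: "\<forall>y\<in>cs. \<bar>V y\<bar> \<le> CV"
    using Vs' unfolding cs_def bounded_iff by auto
  have qf0: "0 \<le> qf \<alpha> n y" if "y \<in> cs" for y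
    using that \<alpha> by (simp add: qf_def cs_def closed_strip_def)
  have lowU: "- (M * \<epsilon> * Cp) - CV + \<eta> * norm y \<le> U y" if "y \<in> cs" for y
  proof -
    have "- (M * \<epsilon> * Cp) \<le> M * \<epsilon> * \<phi> y"
      using Cp that Me by (smt (verit, best) mult_left_mono abs_le_iff mult_minus_right)
    moreover have "- CV \<le> - V y" using CV that by (smt (verit))
    moreover have "0 \<le> \<tau> * qf \<alpha> n y" using qf0[OF that] \<tau> by simp
    moreover have "\<eta> * norm y \<le> \<eta> * hh y" using hh_ge_norm[of y] \<eta> by (simp add: mult_left_mono)
    ultimately show ?thesis unfolding U_def by linarith
  qed
  have y0cs: "y0 \<in> cs" using y0 R by (simp add: cs_def closed_strip_def hyperpl_def)
  have Uy0: "U y0 = \<eta> * hh y0"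
  proof -
    have "\<phi> y0 = 1 / \<epsilon>" using phi' y0 by (simp add: R_def)
    moreover have "V y0 = M" using Vs' y0 by (simp add: M_def)
    moreover have "qf \<alpha> n y0 = 0" using y0 by (simp add: qf_def hyperpl_def)
    ultimately show ?thesis using eps by (simp add: U_def)
  qed
  define KK where "KK = {y \<in> cs. U y \<le> U y0}"
  have "closed KK" unfolding KK_def
    by (rule continuous_on_closed_Collect_le[OF contU continuous_on_const]) (simp add: cs_def closed_cs)
  moreover have "bounded KK"
    unfolding bounded_iff
  proof (intro exI ballI)
    fix y assume "y \<in> KK"
    then have "y \<in> cs" "U y \<le> U y0" by (auto simp: KK_def)
    with lowU[OF this(1)] have "\<eta> * norm y \<le> U y0 + M * \<epsilon> * Cp + CV" by linarith
    then show "norm y \<le> (U y0 + M * \<epsilon> * Cp + CV) / \<eta>" using \<eta> by (simp add: pos_le_divide_eq mult.commute)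
  qed
  ultimately have "compact KK" by (simp add: compact_eq_bounded_closed)
  moreover have "y0 \<in> KK" using y0cs by (simp add: KK_def)
  moreover have "continuous_on KK U" using contU by (rule continuous_on_subset) (auto simp: KK_def)
  ultimately obtain ys where ys: "ys \<in> KK" "\<forall>z\<in>KK. U ys \<le> U z"
    using continuous_attains_inf[of KK U] by blast
  have ysc: "ys \<in> cs" using ys by (simp add: KK_def)
  have gmin: "\<forall>z\<in>cs. U ys \<le> U z"
  proof
    fix z assume "z \<in> cs"
    show "U ys \<le> U z"
    proof (cases "U z \<le> U y0")
      case True then show ?thesis using ys \<open>z \<in> cs\<close> by (simp add: KK_def)
    next
      case False then show ?thesis using ys by (simp add: KK_def)
    qed
  qed
  have s_range: "0 \<le> ys \<bullet> n" "ys \<bullet> n \<le> R" using ysc by (auto simp: cs_def closed_strip_def)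
  have nn: "n \<bullet> n = 1" using n by (simp add: norm_eq_sqrt_inner)
  show False
  proof (cases "ys \<bullet> n = R")
    case True
    then have "ys \<in> hyperpl n R" by (simp add: hyperpl_def)
    then have "\<phi> ys = 0" "V ys = 0" using phi' Vs' by auto
    moreover have "qf \<alpha> n ys = qR" using True by (simp add: qf_def qR_def)
    ultimately have "U ys = \<tau> * qR + \<eta> * hh ys" by (simp add: U_def)
    moreover have "0 \<le> \<eta> * hh ys" using \<eta> hh_pos[of ys] by simp
    moreover have "U ys \<le> U y0" using ys by (simp add: KK_def)
    ultimately show False using Uy0 \<eta>1 mult_pos_pos[OF \<tau> qR] by linarith
  next
    case notR: False
    show False
    proof (cases "ys \<bullet> n = 0")
      case True
      then have ysh: "ys \<in> hyperpl n 0" by (simp add: hyperpl_def)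
      then obtain D where D: "normal_deriv \<phi> n ys D" "D \<le> -c1" using phiD by blast
      have dV: "normal_deriv V n ys (g ys)" using VD ysh by blast
      have dq: "((\<lambda>t. qf \<alpha> n (ys + t *\<^sub>R n)) has_real_derivative (Gq \<alpha> n ys \<bullet> n)) (at_right 0)"
        by (rule dir_deriv[OF qf_deriv]) simp
      have dh: "((\<lambda>t. hh (ys + t *\<^sub>R n)) has_real_derivative (Gh ys \<bullet> n)) (at_right 0)"
        by (rule dir_deriv[OF hh_deriv]) simp
      have Gqn: "Gq \<alpha> n ys \<bullet> n = \<alpha>" using True nn by (simp add: Gq_def)
      have Ghn: "Gh ys \<bullet> n = 0" using True by (simp add: Gh_def)
      have dU: "((\<lambda>t. U (ys + t *\<^sub>R n)) has_real_derivative
          (M * \<epsilon> * D - g ys + \<tau> * \<alpha> + \<eta> * 0)) (at_right 0)"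
        unfolding U_def
        using D(1) dV dq dh unfolding normal_deriv_def Gqn Ghn
        by (intro DERIV_add DERIV_diff DERIV_cmult) auto
      have "M * \<epsilon> * D \<le> M * \<epsilon> * (-c1)" using D(2) Me by (rule mult_left_mono)
      then have neg: "M * \<epsilon> * D - g ys + \<tau> * \<alpha> + \<eta> * 0 < 0"
        using gK[rule_format, of ys] \<tau>\<alpha> \<delta> unfolding \<delta>_def by simp
      from has_real_derivative_neg_dec_right[OF dU neg]
      obtain d where d: "d > 0" "\<forall>h>0. 0 + h \<in> {0<..} \<longrightarrow> h < d \<longrightarrow> U (ys + 0 *\<^sub>R n) > U (ys + (0 + h) *\<^sub>R n)"
        by blast
      define h where "h = min d R / 2"
      have h: "0 < h" "h < d" "h \<le> R" using d(1) R by (auto simp: h_def min_def)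
      have "U (ys + h *\<^sub>R n) < U ys" using d h by auto
      moreover have "ys + h *\<^sub>R n \<in> cs"
        using True h nn by (simp add: cs_def closed_strip_def inner_add_left)
      ultimately show False using gmin by force
    next
      case False
      then have yss: "ys \<in> ss" using notR s_range by (simp add: ss_def strip_def)
      have ssub: "ss \<subseteq> cs" by (auto simp: ss_def cs_def strip_def closed_strip_def)
      obtain Gp Hp where Gp: "C2_with ss \<phi> Gp Hp" "\<forall>y\<in>ss. Lop A B Gp Hp y = 0"
        using phi' unfolding L_harmonic_def ss_def by blast
      obtain GV HV where GV: "C2_with ss V GV HV" "\<forall>y\<in>ss. Lop A B GV HV y = 0"
        using Vs' unfolding L_harmonic_def ss_def by blast
      define GU where "GU y = (M * \<epsilon>) *\<^sub>R Gp y - GV y + \<tau> *\<^sub>R Gq \<alpha> n y + \<eta> *\<^sub>R Gh y" for y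
      define HU where "HU = (M * \<epsilon>) *\<^sub>R Hp ys - HV ys + \<tau> *\<^sub>R Hq \<alpha> n ys + \<eta> *\<^sub>R Hh ys"
      have dUall: "\<forall>z\<in>ss. (U has_derivative (\<lambda>k. GU z \<bullet> k)) (at z)"
      proof
        fix z assume z: "z \<in> ss"
        have a: "(\<phi> has_derivative (\<lambda>k. Gp z \<bullet> k)) (at z)" using Gp z by (simp add: C2_with_def)
        have b: "(V has_derivative (\<lambda>k. GV z \<bullet> k)) (at z)" using GV z by (simp add: C2_with_def)
        have "((\<lambda>y. M * \<epsilon> * \<phi> y - V y + \<tau> * qf \<alpha> n y + \<eta> * hh y) has_derivative
            (\<lambda>k. M * \<epsilon> * (Gp z \<bullet> k) - GV z \<bullet> k + \<tau> * (Gq \<alpha> n z \<bullet> k) + \<eta> * (Gh z \<bullet> k))) (at z)"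
          by (intro has_derivative_add has_derivative_diff has_derivative_mult_right a b qf_deriv hh_deriv)
        then show "(U has_derivative (\<lambda>k. GU z \<bullet> k)) (at z)"
          unfolding U_def[abs_def]
          by (rule has_derivative_eq_rhs) (simp add: fun_eq_iff GU_def inner_add_left inner_diff_left)
      qed
      have dGU: "(GU has_derivative (\<lambda>k. HU *v k)) (at ys)"
      proof -
        have a: "(Gp has_derivative (\<lambda>k. Hp ys *v k)) (at ys)" using Gp yss by (simp add: C2_with_def)
        have b: "(GV has_derivative (\<lambda>k. HV ys *v k)) (at ys)" using GV yss by (simp add: C2_with_def)
        have "((\<lambda>y. (M * \<epsilon>) *\<^sub>R Gp y - GV y + \<tau> *\<^sub>R Gq \<alpha> n y + \<eta> *\<^sub>R Gh y) has_derivative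
            (\<lambda>k. (M * \<epsilon>) *\<^sub>R (Hp ys *v k) - HV ys *v k + \<tau> *\<^sub>R (Hq \<alpha> n ys *v k) + \<eta> *\<^sub>R (Hh ys *v k))) (at ys)"
          by (intro has_derivative_add has_derivative_diff has_derivative_scaleR_right a b Gq_deriv Gh_deriv)
        then show ?thesis
          unfolding GU_def[abs_def]
          by (rule has_derivative_eq_rhs)
             (simp add: fun_eq_iff HU_def matrix_vector_mult_add_rdistrib matrix_vector_mult_diff_rdistrib
                scaleR_matrix_vector_assoc)
      qed
      have minss: "\<forall>z\<in>ss. U ys \<le> U z" using gmin ssub by blast
      note so = second_order[OF open_ss[of n R, folded ss_def] yss minss dUall dGU]
      have psdA: "\<forall>\<xi>. 0 \<le> \<xi> \<bullet> (A ys *v \<xi>)"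
        using A_ell lam by (smt (verit) mult_nonneg_nonneg zero_le_power2)
      have tr0: "0 \<le> trA (A ys) HU"
        by (rule trace_nonneg[OF A_sym[rule_format] psdA]) (use so(2) in blast)
      have "trA (A ys) HU = M * \<epsilon> * trA (A ys) (Hp ys) - trA (A ys) (HV ys)
          + \<tau> * trA (A ys) (Hq \<alpha> n ys) + \<eta> * trA (A ys) (Hh ys)"
        by (simp add: HU_def trA_add trA_diff trA_scale)
      moreover have "trA (A ys) (Hp ys) = - (B ys \<bullet> Gp ys)" using Gp(2) yss by (simp add: Lop_eq eq_neg_iff_add_eq_0)
      moreover have "trA (A ys) (HV ys) = - (B ys \<bullet> GV ys)" using GV(2) yss by (simp add: Lop_eq eq_neg_iff_add_eq_0)
      moreover have "B ys \<bullet> GU ys = 0" using so(1) by simp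
      ultimately have LU: "0 \<le> \<tau> * (trA (A ys) (Hq \<alpha> n ys) + B ys \<bullet> Gq \<alpha> n ys)
          + \<eta> * (trA (A ys) (Hh ys) + B ys \<bullet> Gh ys)"
        using tr0 by (simp add: GU_def inner_add_right inner_diff_right algebra_simps)
      have Lq: "trA (A ys) (Hq \<alpha> n ys) + B ys \<bullet> Gq \<alpha> n ys \<le> - \<alpha> * exp (- \<alpha> * (ys \<bullet> n))"
        by (rule Lq_bound[OF lam _ _ n \<alpha>_def]) (use A_ell Bb in auto)
      have "exp (- \<alpha> * R) \<le> exp (- \<alpha> * (ys \<bullet> n))" using s_range \<alpha> by simp
      then have "- \<alpha> * exp (- \<alpha> * (ys \<bullet> n)) \<le> - \<beta>" using \<alpha> by (simp add: \<beta>_def)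
      with Lq have "trA (A ys) (Hq \<alpha> n ys) + B ys \<bullet> Gq \<alpha> n ys \<le> - \<beta>" by linarith
      then have "\<tau> * (trA (A ys) (Hq \<alpha> n ys) + B ys \<bullet> Gq \<alpha> n ys) \<le> \<tau> * (- \<beta>)"
        using \<tau> by (intro mult_left_mono) auto
      then have Lq': "\<tau> * (trA (A ys) (Hq \<alpha> n ys) + B ys \<bullet> Gq \<alpha> n ys) \<le> - (\<tau> * \<beta>)" by simp
      have Lh: "trA (A ys) (Hh ys) + B ys \<bullet> Gh ys \<le> real CARD('n) * Lam + Bm"
        by (rule Lh_bound) (use A_ell psdA Bb in auto)
      have "real CARD('n) * Lam + Bm \<le> Ch" by (simp add: Ch_def)
      with Lh have "trA (A ys) (Hh ys) + B ys \<bullet> Gh ys \<le> Ch" by linarith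
      then have Lh': "\<eta> * (trA (A ys) (Hh ys) + B ys \<bullet> Gh ys) \<le> \<eta> * Ch"
        using \<eta> by (intro mult_left_mono) auto
      show False using LU Lq' Lh' \<eta>2 mult_pos_pos[OF \<tau> \<beta>] by linarith
    qed
  qed
qed



theorem lemma5p6:
  fixes A :: "real^'n \<Rightarrow> real^'n^'n" and B :: "real^'n \<Rightarrow> real^'n"
    and g w :: "real^'n \<Rightarrow> real" and n :: "real^'n"
    and \<gamma> lam Lam \<epsilon> c\<^sub>1 c\<^sub>2 :: real
  assumes dim: "CARD('n) \<ge> 2"
    and n_unit: "norm n = 1"
    and gamma: "0 < \<gamma>" "\<gamma> < 1"
    and ell: "0 < lam" "lam \<le> Lam"
    and A_per: "zperiodic A" and A_hol: "C_gamma \<gamma> A"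
    and A_sym: "\<forall>y. transpose (A y) = A y"
    and A_ell: "\<forall>y \<xi>. lam * (norm \<xi>)\<^sup>2 \<le> \<xi> \<bullet> (A y *v \<xi>) \<and> \<xi> \<bullet> (A y *v \<xi>) \<le> Lam * (norm \<xi>)\<^sup>2"
    and B_per: "zperiodic B" and B_hol: "C_gamma \<gamma> B"
    and g_per: "zperiodic g" and g_hol: "C_gamma \<gamma> g"
    and m_ex: "\<exists>m. invariant_density A B m \<and> integral unit_cube (\<lambda>y. m y *\<^sub>R B y) = 0"
    and eps: "0 < \<epsilon>" "\<epsilon> \<le> 1"
    and c: "0 < c\<^sub>1" "c\<^sub>1 < c\<^sub>2"
    and phi_bounds: "\<forall>\<epsilon>'. 0 < \<epsilon>' \<and> \<epsilon>' \<le> 1 \<longrightarrow>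
        (\<exists>\<phi>. strip_dirichlet_sol A B n (1/\<epsilon>') (\<lambda>_. 1/\<epsilon>') \<phi>
             \<and> (\<forall>y\<in>hyperpl n 0. \<exists>D. normal_deriv \<phi> n y D \<and> -c\<^sub>2 \<le> D \<and> D \<le> -c\<^sub>1))"
    and w_reg: "C1_gamma_on \<gamma> (hyperpl n 0) w"
    and w_sol: "\<exists>V. strip_dirichlet_sol A B n (1/\<epsilon>) w V
        \<and> (\<forall>y\<in>hyperpl n 0. normal_deriv V n y (g y))"
  shows "\<forall>y\<in>hyperpl n 0.
     - (1 / (c\<^sub>1 * \<epsilon>)) * (SUP z. \<bar>g z\<bar>) \<le> w y \<and> w y \<le> (1 / (c\<^sub>1 * \<epsilon>)) * (SUP z. \<bar>g z\<bar>)"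
proof -
  have negsol: "strip_dirichlet_sol A B n r (\<lambda>y. - u y) (\<lambda>y. - W y)"
    if W: "strip_dirichlet_sol A B n r u W" for r u W
  proof -
    obtain G H where GH: "C2_with (strip n r) W G H" "\<forall>y\<in>strip n r. Lop A B G H y = 0"
      using W unfolding strip_dirichlet_sol_def L_harmonic_def by blast
    have "C2_with (strip n r) (\<lambda>y. - W y) (\<lambda>y. - G y) (\<lambda>y. - H y)"
      unfolding C2_with_def
    proof (intro conjI ballI)
      fix y assume y: "y \<in> strip n r"
      have "((\<lambda>y. - W y) has_derivative (\<lambda>k. - (G y \<bullet> k))) (at y)"
        using GH(1) y unfolding C2_with_def by (intro has_derivative_minus) auto
      then show "((\<lambda>y. - W y) has_derivative (\<lambda>k. - G y \<bullet> k)) (at y)" by simp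
      have "((\<lambda>y. - G y) has_derivative (\<lambda>k. - (H y *v k))) (at y)"
        using GH(1) y unfolding C2_with_def by (intro has_derivative_minus) auto
      then show "((\<lambda>y. - G y) has_derivative (\<lambda>k. - H y *v k)) (at y)" by (simp add: neg_mv)
    next
      show "continuous_on (strip n r) (\<lambda>y. - H y)"
        using GH(1) unfolding C2_with_def by (intro continuous_intros) auto
    qed
    moreover have "\<forall>y\<in>strip n r. Lop A B (\<lambda>y. - G y) (\<lambda>y. - H y) y = 0"
      using GH(2) by (simp add: Lop_def sum_negf) (smt (verit))
    ultimately have "L_harmonic A B (strip n r) (\<lambda>y. - W y)" unfolding L_harmonic_def by blast
    moreover have "continuous_on (closed_strip n r) (\<lambda>y. - W y)"
      using W unfolding strip_dirichlet_sol_def by (intro continuous_intros) auto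
    moreover have "bounded ((\<lambda>y. - W y) ` closed_strip n r)"
      using W unfolding strip_dirichlet_sol_def bounded_iff by auto
    ultimately show ?thesis using W unfolding strip_dirichlet_sol_def by auto
  qed
  obtain Bm where Bm: "\<forall>y. norm (B y) \<le> Bm"
    using B_hol unfolding C_gamma_def bounded_iff by auto
  define K where "K = (SUP z. \<bar>g z\<bar>)"
  have bdd: "bdd_above (range (\<lambda>z. \<bar>g z\<bar>))"
  proof -
    obtain C where "\<forall>x\<in>range g. norm x \<le> C" using g_hol unfolding C_gamma_def bounded_iff by blast
    then show ?thesis by (auto intro!: bdd_aboveI[where M = C])
  qed
  have gK: "\<bar>g y\<bar> \<le> K" for y unfolding K_def by (rule cSUP_upper[OF _ bdd]) simp
  have K0: "0 \<le> K" using gK[of 0] by simp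
  obtain \<phi> where phi: "strip_dirichlet_sol A B n (1/\<epsilon>) (\<lambda>_. 1/\<epsilon>) \<phi>"
      "\<forall>y\<in>hyperpl n 0. \<exists>D. normal_deriv \<phi> n y D \<and> -c\<^sub>2 \<le> D \<and> D \<le> -c\<^sub>1"
    using phi_bounds eps by blast
  have phiD: "\<forall>y\<in>hyperpl n 0. \<exists>D. normal_deriv \<phi> n y D \<and> D \<le> -c\<^sub>1" using phi(2) by blast
  obtain V where V: "strip_dirichlet_sol A B n (1/\<epsilon>) w V" "\<forall>y\<in>hyperpl n 0. normal_deriv V n y (g y)"
    using w_sol by blast
  have A_ell': "\<forall>y \<xi>. lam * (norm \<xi>)\<^sup>2 \<le> \<xi> \<bullet> (A y *v \<xi>) \<and> \<xi> \<bullet> (A y *v \<xi>) \<le> Lam * (norm \<xi>)\<^sup>2"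
    using A_ell .
  show ?thesis
  proof
    fix y assume y: "y \<in> hyperpl n 0"
    have up: "w y \<le> K / (c\<^sub>1 * \<epsilon>)"
      by (rule core[OF n_unit eps(1) c(1) ell(1) A_sym A_ell' Bm phi(1) phiD V(1) V(2) _ K0 y])
         (use gK in \<open>smt (verit) abs_le_iff\<close>)
    have VD': "\<forall>y\<in>hyperpl n 0. normal_deriv (\<lambda>y. - V y) n y (- g y)"
      using V(2) unfolding normal_deriv_def by (auto intro: DERIV_minus)
    have "- w y \<le> K / (c\<^sub>1 * \<epsilon>)"
      by (rule core[OF n_unit eps(1) c(1) ell(1) A_sym A_ell' Bm phi(1) phiD negsol[OF V(1)] VD' _ K0 y])
         (use gK in \<open>smt (verit) abs_le_iff\<close>)
    with up show "- (1 / (c\<^sub>1 * \<epsilon>)) * (SUP z. \<bar>g z\<bar>) \<le> w y \<and> w y \<le> (1 / (c\<^sub>1 * \<epsilon>)) * (SUP z. \<bar>g z\<bar>)"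
      unfolding K_def[symmetric] by simp
  qed
qed


end
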